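(* Let $\mathbb{K}$ be an algebraically closed field of characteristic zero, $\mathcal{C}\subset\mathbb{K}^2$ an affine irreducible plane curve, $A=(a,b)\in\mathbb{K}^2$, and assume that $\mathcal{C}_0\neq\emptyset$, that $\mathcal{C}$ is not a circle centered at $A$, and that $\mathcal{C}$ is not a line passing through $A$. Then there is no infinite set $D\subset\mathbb{K}\setminus\{0\}$ together with an irreducible algebraic curve $\mathcal{M}\subset\mathbb{K}^2$ such that $\mathcal{M}$ is a component of $\mathfrak{C}(\mathcal{C},A,d)$ for every $d\in D$; that is, at most finitely many distances $d$ give conchoids $\mathfrak{C}(\mathcal{C},A,d)$ all sharing a common component.
   Context: For $\mathcal{C}$ defined by an irreducible polynomial $f(y_1,y_2)$ and $d\in\mathbb{K}\setminus\{0\}$: $\mathfrak{B}(\mathcal{C},A,d)\subset\mathbb{K}^2\times\mathbb{K}^2\times\mathbb{K}$ is the set of $(\bar x,\bar y,w)$ with $f(y_1,y_2)=0$, $(x_1-y_1)^2+(x_2-y_2)^2=d^2$, $(y_2-b)(x_1-y_1)-(y_1-a)(x_2-y_2)=0$, $w((y_1-a)^2+(y_2-b)^2)=1$; the conchoid $\mathfrak{C}(\mathcal{C},A,d)$ is the Zariski closure in $\mathbb{K}^2$ of the projection of $\mathfrak{B}(\mathcal{C},A,d)$ onto the $\bar x$ coordinates. $\mathcal{C}_0=\{(p_1,p_2)\in\mathcal{C}:(p_1-a)^2+(p_2-b)^2\neq0\}$. A circle centered at $A$ of radius $r$ is $(y_1-a)^2+(y_2-b)^2=r^2$. *)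

theory Defs
  imports "HOL-Computational_Algebra.Computational_Algebra"
begin

text \<open>Bivariate polynomials over K are represented as nested univariate
polynomials K[y1][y2], i.e. of type 'a poly poly: the outer variable is y2,
the inner variable is y1.\<close>

definition eval2 :: "'a::comm_ring_1 poly poly \<Rightarrow> 'a \<Rightarrow> 'a \<Rightarrow> 'a" where
  "eval2 f y1 y2 = poly (poly f [:y2:]) y1"

definition zero_set :: "'a::comm_ring_1 poly poly set \<Rightarrow> ('a \<times> 'a) set" where
  "zero_set F = {(y1, y2). \<forall>f\<in>F. eval2 f y1 y2 = 0}"

definition zariski_closed :: "('a::comm_ring_1 \<times> 'a) set \<Rightarrow> bool" where
  "zariski_closed S \<longleftrightarrow> (\<exists>F. S = zero_set F)"

definition zariski_closure :: "('a::comm_ring_1 \<times> 'a) set \<Rightarrow> ('a \<times> 'a) set" where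
  "zariski_closure S = \<Inter> {T. zariski_closed T \<and> S \<subseteq> T}"

definition zariski_irreducible :: "('a::comm_ring_1 \<times> 'a) set \<Rightarrow> bool" where
  "zariski_irreducible S \<longleftrightarrow> zariski_closed S \<and> S \<noteq> {} \<and>
     (\<forall>S1 S2. zariski_closed S1 \<longrightarrow> zariski_closed S2 \<longrightarrow> S = S1 \<union> S2 \<longrightarrow> S = S1 \<or> S = S2)"

definition component_of :: "('a::comm_ring_1 \<times> 'a) set \<Rightarrow> ('a \<times> 'a) set \<Rightarrow> bool" where
  "component_of M S \<longleftrightarrow> zariski_irreducible M \<and> M \<subseteq> S \<and>
     (\<forall>N. zariski_irreducible N \<longrightarrow> M \<subseteq> N \<longrightarrow> N \<subseteq> S \<longrightarrow> N = M)"

definition curve :: "'a::comm_ring_1 poly poly \<Rightarrow> ('a \<times> 'a) set" where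
  "curve f = {(y1, y2). eval2 f y1 y2 = 0}"

definition irreducible_curve :: "('a::field \<times> 'a) set \<Rightarrow> bool" where
  "irreducible_curve M \<longleftrightarrow> (\<exists>g. irreducible g \<and> M = curve g)"

definition conchoid_B ::
  "'a::field poly poly \<Rightarrow> 'a \<times> 'a \<Rightarrow> 'a \<Rightarrow> (('a \<times> 'a) \<times> ('a \<times> 'a) \<times> 'a) set" where
  "conchoid_B f A d = (case A of (a, b) \<Rightarrow>
     {((x1, x2), (y1, y2), w).
        eval2 f y1 y2 = 0 \<and>
        (x1 - y1)^2 + (x2 - y2)^2 = d^2 \<and>
        (y2 - b) * (x1 - y1) - (y1 - a) * (x2 - y2) = 0 \<and>
        w * ((y1 - a)^2 + (y2 - b)^2) = 1})"

definition conchoid :: "'a::field poly poly \<Rightarrow> 'a \<times> 'a \<Rightarrow> 'a \<Rightarrow> ('a \<times> 'a) set" where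
  "conchoid f A d = zariski_closure (fst ` conchoid_B f A d)"

definition C0 :: "'a::field poly poly \<Rightarrow> 'a \<times> 'a \<Rightarrow> ('a \<times> 'a) set" where
  "C0 f A = (case A of (a, b) \<Rightarrow>
     {(p1, p2) \<in> curve f. (p1 - a)^2 + (p2 - b)^2 \<noteq> 0})"

definition circle_at :: "'a::field \<times> 'a \<Rightarrow> 'a \<Rightarrow> ('a \<times> 'a) set" where
  "circle_at A r = (case A of (a, b) \<Rightarrow> {(y1, y2). (y1 - a)^2 + (y2 - b)^2 = r^2})"

definition line_through :: "'a::field \<times> 'a \<Rightarrow> ('a \<times> 'a) set \<Rightarrow> bool" where
  "line_through A L \<longleftrightarrow> (case A of (a, b) \<Rightarrow>
     \<exists>u v. (u, v) \<noteq> (0, 0) \<and> L = {(y1, y2). u * (y1 - a) + v * (y2 - b) = 0})"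

end

theory Submission
  imports Defs
begin


lemma eval2_add[simp]: "eval2 (p + q) x y = eval2 p x y + eval2 q x y"
  by (simp add: eval2_def)
lemma eval2_mult[simp]: "eval2 (p * q) x y = eval2 p x y * eval2 q x y"
  by (simp add: eval2_def)
lemma eval2_minus[simp]: "eval2 (p - q) x y = eval2 p x y - eval2 q x y"
  by (simp add: eval2_def)
lemma eval2_uminus[simp]: "eval2 (- p) x y = - eval2 p x y"
  by (simp add: eval2_def)
lemma eval2_0[simp]: "eval2 0 x y = 0"
  by (simp add: eval2_def)
lemma eval2_1[simp]: "eval2 1 x y = 1"
  by (simp add: eval2_def)
lemma eval2_power[simp]: "eval2 (p ^ n) x y = eval2 p x y ^ n"
  by (simp add: eval2_def)
lemma eval2_sum: "eval2 (\<Sum>k\<in>A. p k) x y = (\<Sum>k\<in>A. eval2 (p k) x y)"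
  by (simp add: eval2_def poly_sum)
lemma eval2_const[simp]: "eval2 [:[:c:]:] x y = c"
  by (simp add: eval2_def)
lemma eval2_X1[simp]: "eval2 [:[:0,1:]:] x y = x"
  by (simp add: eval2_def)
lemma eval2_X2[simp]: "eval2 [:0,1:] x y = y"
  by (simp add: eval2_def)
lemma eval2_line: "eval2 [:[:-(u*a+v*b), u:], [:v:]:] x y = u*(x-a) + v*(y-b)"
  by (simp add: eval2_def algebra_simps)

lemma hom_poly:
  fixes h :: "'b::comm_ring_1 \<Rightarrow> 'c::comm_ring_1"
  assumes add: "\<And>a b. h (a + b) = h a + h b" and mult: "\<And>a b. h (a * b) = h a * h b"
    and z: "h 0 = 0"
  shows "h (poly Q p) = poly (map_poly h Q) (h p)"
  by (induction Q) (simp_all add: map_poly_pCons z add mult)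

lemma eval2_alt: "eval2 f x y = poly (map_poly (\<lambda>c. poly c x) f) y"
  unfolding eval2_def
  by (rule hom_poly[where h="\<lambda>c. poly c x" and p="[:y:]", simplified])


definition ev3 :: "'a::comm_ring_1 poly poly poly \<Rightarrow> 'a \<Rightarrow> 'a \<Rightarrow> 'a \<Rightarrow> 'a" where
  "ev3 p x y u = eval2 (poly p [:[:u:]:]) x y"

lemma ev3_add[simp]: "ev3 (p + q) x y u = ev3 p x y u + ev3 q x y u"
  by (simp add: ev3_def)
lemma ev3_mult[simp]: "ev3 (p * q) x y u = ev3 p x y u * ev3 q x y u"
  by (simp add: ev3_def)
lemma ev3_minus[simp]: "ev3 (p - q) x y u = ev3 p x y u - ev3 q x y u"
  by (simp add: ev3_def)
lemma ev3_0[simp]: "ev3 0 x y u = 0"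
  by (simp add: ev3_def)
lemma ev3_1[simp]: "ev3 1 x y u = 1"
  by (simp add: ev3_def)
lemma ev3_K[simp]: "ev3 [:[:[:c:]:]:] x y u = c"
  by (simp add: ev3_def)
lemma ev3_X1[simp]: "ev3 [:[:[:0,1:]:]:] x y u = x"
  by (simp add: ev3_def)
lemma ev3_X2[simp]: "ev3 [:[:0,1:]:] x y u = y"
  by (simp add: ev3_def)
lemma ev3_U[simp]: "ev3 [:0,1:] x y u = u"
  by (simp add: ev3_def)

lemma ev3_alt: "ev3 p x y u = poly (map_poly (\<lambda>c. eval2 c x y) p) u"
  unfolding ev3_def
  by (rule hom_poly[where h="\<lambda>c. eval2 c x y" and p="[:[:u:]:]", simplified])

lemma ev3_coeffs: "ev3 p x y u = (\<Sum>k\<le>degree p. eval2 (coeff p k) x y * u ^ k)"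
  unfolding ev3_def poly_altdef
  by (simp add: eval2_sum)

definition Comp :: "'a::comm_ring_1 poly poly \<Rightarrow> 'a poly poly poly \<Rightarrow> 'a poly poly poly \<Rightarrow> 'a poly poly poly" where
  "Comp f p1 p2 = poly (map_poly (\<lambda>c. poly (map_poly (\<lambda>a. [:[:[:a:]:]:]) c) p1) f) p2"

lemma ev3_poly: "ev3 (poly Q p) x y u = poly (map_poly (\<lambda>c. ev3 c x y u) Q) (ev3 p x y u)"
  by (rule hom_poly) simp_all

lemma ev3_Comp: "ev3 (Comp f p1 p2) x y u = eval2 f (ev3 p1 x y u) (ev3 p2 x y u)"
proof -
  have inner: "ev3 (poly (map_poly (\<lambda>a. [:[:[:a:]:]:]) c) p1) x y u = poly c (ev3 p1 x y u)" for c :: "'a poly"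
    by (simp add: ev3_poly map_poly_map_poly o_def)
  show ?thesis
    unfolding Comp_def ev3_poly eval2_alt
    by (simp add: map_poly_map_poly o_def inner)
qed

lemma univ_comp: "\<exists>W. \<forall>s. poly W s = eval2 Q (c1 + k1*s) (c2 + k2*s)"
proof -
  let ?W = "poly (map_poly (\<lambda>c. pcompose c [:c1,k1:]) Q) [:c2,k2:]"
  have "poly ?W s = eval2 Q (c1 + k1*s) (c2 + k2*s)" for s
  proof -
    have "poly ?W s = poly (map_poly (\<lambda>c. poly c s) (map_poly (\<lambda>c. pcompose c [:c1,k1:]) Q)) (c2 + k2*s)"
      by (subst hom_poly[where h="\<lambda>c. poly c s"]) (simp_all add: mult.commute)
    also have "\<dots> = eval2 Q (c1 + k1*s) (c2 + k2*s)"
      by (simp add: eval2_alt map_poly_map_poly o_def poly_pcompose pcompose_0 algebra_simps)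
    finally show ?thesis .
  qed
  thus ?thesis by blast
qed


lemma line_dvd_v:
  fixes Q :: "'a::field_char_0 poly poly"
  assumes v: "v \<noteq> 0" and van: "\<forall>x y. u*(x-a)+v*(y-b) = 0 \<longrightarrow> eval2 Q x y = 0"
  shows "[:[:-(u*a+v*b), u:], [:v:]:] dvd Q"
proof -
  define \<phi> where "\<phi> = [:(u*a+v*b)/v, -u/v:]"
  have pphi: "poly \<phi> x = (u*a+v*b)/v - u/v*x" for x by (simp add: \<phi>_def algebra_simps)
  have "poly (poly Q \<phi>) x = 0" for x
  proof -
    have "poly (poly Q \<phi>) x = poly (map_poly (\<lambda>c. poly c x) Q) (poly \<phi> x)"
      by (rule hom_poly) simp_all
    also have "\<dots> = eval2 Q x (poly \<phi> x)" by (simp add: eval2_alt)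
    also have "\<dots> = 0"
    proof -
      have "u*(x-a)+v*(poly \<phi> x-b) = 0" using v unfolding pphi by (simp add: field_simps)
      thus ?thesis using van by blast
    qed
    finally show ?thesis .
  qed
  hence z: "poly Q \<phi> = 0" using poly_all_0_iff_0 by blast
  have Qeq: "Q = [:-\<phi>, 1:] * synthetic_div Q \<phi>"
    using synthetic_div_correct'[of \<phi> Q] z by simp
  have l1: "[:1/v:] * [:-(u*a+v*b), u:] = -\<phi>"
    unfolding \<phi>_def using v by (simp add: field_simps)
  have l2: "[:1/v:] * [:v:] = (1 :: 'a poly)"
    using v by (simp add: one_pCons)
  have leq: "[:-\<phi>, 1:] = smult [:1/v:] [:[:-(u*a+v*b), u:], [:v:]:]"
    using v by (simp add: l2) (simp add: \<phi>_def field_simps)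
  have "Q = [:[:-(u*a+v*b), u:], [:v:]:] * smult [:1/v:] (synthetic_div Q \<phi>)"
  proof -
    have "Q = smult [:1/v:] [:[:-(u*a+v*b), u:], [:v:]:] * synthetic_div Q \<phi>"
      using Qeq unfolding leq .
    thus ?thesis by (simp only: mult_smult_left mult_smult_right)
  qed
  thus ?thesis by (rule dvdI)
qed
lemma line_dvd_u:
  fixes Q :: "'a::field_char_0 poly poly"
  assumes u: "u \<noteq> 0" and van: "\<forall>y. eval2 Q a y = 0"
  shows "[:[:-(u*a), u:]:] dvd Q"
proof -
  have "map_poly (\<lambda>c. poly c a) Q = 0"
    using van poly_all_0_iff_0 by (auto simp: eval2_alt)
  hence ck: "poly (coeff Q k) a = 0" for k
    by (metis coeff_0 coeff_map_poly poly_0)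
  define R where "R = map_poly (\<lambda>c. synthetic_div c a) Q"
  have QR: "Q = smult [:-a,1:] R"
  proof (rule poly_eqI)
    fix k
    have "coeff Q k = [:-a, 1:] * synthetic_div (coeff Q k) a"
      using synthetic_div_correct'[of a "coeff Q k"] ck[of k] by simp
    thus "coeff Q k = coeff (smult [:-a,1:] R) k"
      by (simp add: R_def coeff_map_poly)
  qed
  have c: "[:-(u*a), u:] * [:1/u:] = [:-a,1:]"
    using u by simp
  have "Q = smult ([:-(u*a), u:] * [:1/u:]) R" using QR unfolding c .
  also have "\<dots> = [:[:-(u*a), u:]:] * smult [:1/u:] R"
    by (simp only: smult_smult[symmetric] mult_smult_right smult_1_left) simp
  finally show ?thesis by (rule dvdI)
qed

lemma line_dvd:
  fixes Q :: "'a::field_char_0 poly poly"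
  assumes uv: "(u,v) \<noteq> (0,0)" and van: "\<forall>x y. u*(x-a)+v*(y-b) = 0 \<longrightarrow> eval2 Q x y = 0"
  shows "[:[:-(u*a+v*b), u:], [:v:]:] dvd Q"
proof (cases "v = 0")
  case False thus ?thesis using line_dvd_v van by blast
next
  case True
  hence u: "u \<noteq> 0" using uv by auto
  have "\<forall>y. eval2 Q a y = 0" using van True by auto
  from line_dvd_u[OF u this] True show ?thesis by simp
qed

lemma line_not_unit:
  assumes "(u,v) \<noteq> (0,0)"
  shows "\<not> is_unit ([:[:-(u*a+v*b), u:], [:v:]:] :: 'a::field poly poly)"
proof
  assume "is_unit ([:[:-(u*a+v*b), u:], [:v:]:] :: 'a poly poly)"
  then obtain c where c: "[:[:-(u*a+v*b), u:], [:v:]:] = [:c:]" "is_unit c"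
    using is_unit_poly_iff by blast
  then have v: "v = 0" and cc: "c = [:-(u*a+v*b), u:]" by auto
  from c(2) obtain c' where "c = [:c':]" using is_unit_poly_iff by blast
  with cc have "u = 0" by simp
  with v assms show False by simp
qed

lemma line_irr:
  fixes f :: "'a::field_char_0 poly poly"
  assumes irr: "irreducible f" and uv: "(u,v) \<noteq> (0,0)"
    and van: "\<forall>x y. u*(x-a)+v*(y-b) = 0 \<longrightarrow> eval2 f x y = 0"
  shows "line_through (a,b) (curve f)"
proof -
  let ?l = "[:[:-(u*a+v*b), u:], [:v:]:] :: 'a poly poly"
  obtain q where fq: "f = ?l * q" using line_dvd[OF uv van] by (auto elim: dvdE)
  have "is_unit ?l \<or> is_unit q" using irreducibleD[OF irr fq] .
  hence "is_unit q" using line_not_unit[OF uv] by blast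
  then obtain c where c: "q = [:c:]" "is_unit c" using is_unit_poly_iff by blast
  then obtain c0 where c0': "c = [:c0:]" "c0 dvd 1" using is_unit_poly_iff[of c] by blast
  hence c0: "c = [:c0:]" "c0 \<noteq> 0" by auto
  have ev: "eval2 f x y = (u*(x-a)+v*(y-b)) * c0" for x y
  proof -
    have "eval2 f x y = eval2 ?l x y * eval2 q x y" by (subst fq) (rule eval2_mult)
    also have "eval2 q x y = c0" using c c0 by simp
    finally show ?thesis by (simp only: eval2_line)
  qed
  have "curve f = {(y1, y2). u * (y1 - a) + v * (y2 - b) = 0}"
    using c0 by (auto simp: curve_def ev)
  thus ?thesis unfolding line_through_def using uv by auto
qed



lemma curve_infinite:
  fixes g :: "'a::{alg_closed_field, field_char_0} poly poly"
  assumes irr: "irreducible g"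
  shows "infinite (curve g)"
proof (cases "degree g = 0")
  case True
  then obtain c where gc: "g = [:c:]" by (metis degree_0_id)
  have "\<not> is_unit g" using irr by (simp add: irreducible_def)
  hence nu: "\<not> is_unit c" using gc is_unit_poly_iff by blast
  have "c \<noteq> 0" using irr gc by auto
  have "degree c > 0"
  proof (rule ccontr)
    assume "\<not> degree c > 0"
    then obtain c0 where "c = [:c0:]" by (metis degree_0_id neq0_conv)
    with \<open>c \<noteq> 0\<close> nu show False by (simp add: is_unit_poly_iff dvd_field_iff)
  qed
  then obtain r where r: "poly c r = 0" using alg_closed_imp_poly_has_root by blast
  have sub: "range (\<lambda>y. (r,y)) \<subseteq> curve g"
    using r gc by (auto simp: curve_def eval2_def)
  have "infinite (range (\<lambda>y::'a. (r,y)))"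
    using infinite_UNIV_char_0 by (metis finite_imageD inj_onI prod.inject)
  thus ?thesis using sub finite_subset by blast
next
  case False
  have "g \<noteq> 0" using irr by auto
  hence lc: "lead_coeff g \<noteq> 0" by simp
  let ?S = "{x. poly (lead_coeff g) x \<noteq> 0}"
  have "?S = UNIV - {x. poly (lead_coeff g) x = 0}" by auto
  hence infS: "infinite ?S"
    using Diff_infinite_finite[OF poly_roots_finite[OF lc] infinite_UNIV_char_0] by simp
  have "?S \<subseteq> fst ` curve g"
  proof
    fix x assume "x \<in> ?S"
    hence nz: "poly (lead_coeff g) x \<noteq> 0" by simp
    let ?gx = "map_poly (\<lambda>c. poly c x) g"
    have "coeff ?gx (degree g) \<noteq> 0" using nz by (simp add: coeff_map_poly)
    hence "degree g \<le> degree ?gx" by (rule le_degree)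
    hence "degree ?gx > 0" using False by simp
    then obtain y where "poly ?gx y = 0" using alg_closed_imp_poly_has_root by blast
    hence "(x,y) \<in> curve g" by (simp add: curve_def eval2_alt)
    thus "x \<in> fst ` curve g" by force
  qed
  hence "infinite (fst ` curve g)" using infS finite_subset by blast
  thus ?thesis by blast
qed

lemma factor_out:
  fixes l P :: "'a::idom poly"
  assumes "degree l > 0" "P \<noteq> 0"
  shows "\<exists>k Q. P = l^k * Q \<and> \<not> l dvd Q"
  using assms(2)
proof (induction "degree P" arbitrary: P rule: less_induct)
  case less
  show ?case
  proof (cases "l dvd P")
    case False
    thus ?thesis by (intro exI[of _ 0] exI[of _ P]) simp
  next
    case True
    then obtain P' where P': "P = l * P'" by (auto elim: dvdE)
    hence nz: "P' \<noteq> 0" "l \<noteq> 0" using less.prems by auto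
    have "degree P = degree l + degree P'" using P' nz by (simp add: degree_mult_eq)
    hence "degree P' < degree P" using assms(1) by simp
    then obtain k Q where "P' = l^k * Q" "\<not> l dvd Q" using less.hyps nz by blast
    hence "P = l^(Suc k) * Q" using P' by (simp add: mult_ac)
    thus ?thesis using \<open>\<not> l dvd Q\<close> by blast
  qed
qed

lemma sum_even_odd:
  fixes h :: "nat \<Rightarrow> 'a::comm_monoid_add"
  shows "(\<Sum>k\<le>2*m. h k) = (\<Sum>j\<le>m. h (2*j)) + (\<Sum>j<m. h (2*j+1))"
proof (induction m)
  case 0 thus ?case by simp
next
  case (Suc m)
  have "(\<Sum>k\<le>2*Suc m. h k) = (\<Sum>k\<le>2*m. h k) + h (2*m+1) + h (2*m+2)"
    by (simp add: add_ac)
  thus ?case using Suc by (simp add: add_ac)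
qed

lemma img_prop:
  fixes f :: "'a::field poly poly"
  assumes "(x1,x2) \<in> fst ` conchoid_B f (a,b) d"
  shows "(x1,x2) = (a,b) \<or> ((x1-a)^2 + (x2-b)^2 \<noteq> 0 \<and>
     (\<exists>t. eval2 f (a + t*(x1 - a)) (b + t*(x2 - b)) = 0 \<and> (1-t)^2 * ((x1-a)^2 + (x2-b)^2) = d^2))"
proof -
  obtain y1 y2 w where B: "eval2 f y1 y2 = 0" "(x1 - y1)^2 + (x2 - y2)^2 = d^2"
     "(y2 - b) * (x1 - y1) - (y1 - a) * (x2 - y2) = 0" "w * ((y1 - a)^2 + (y2 - b)^2) = 1"
    using assms by (auto simp: conchoid_B_def)
  define p1 where "p1 = y1 - a"
  define p2 where "p2 = y2 - b"
  define q1 where "q1 = x1 - y1"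
  define q2 where "q2 = x2 - y2"
  have col: "p2 * q1 = p1 * q2" using B(3) by (simp add: p1_def p2_def q1_def q2_def)
  have Ny: "p1^2 + p2^2 \<noteq> 0" using B(4) by (auto simp: p1_def p2_def)
  obtain \<mu> where mu: "q1 = \<mu> * p1" "q2 = \<mu> * p2"
  proof (cases "p1 = 0")
    case False
    show ?thesis
      by (rule that[of "q1/p1"]) (use False col in \<open>auto simp: field_simps\<close>)
  next
    case True
    hence "p2 \<noteq> 0" using Ny by auto
    show ?thesis
      by (rule that[of "q2/p2"]) (use True \<open>p2 \<noteq> 0\<close> col in \<open>auto simp: field_simps\<close>)
  qed
  have x1e: "x1 - a = (1+\<mu>) * p1" using mu(1) by (simp add: p1_def q1_def algebra_simps)
  have x2e: "x2 - b = (1+\<mu>) * p2" using mu(2) by (simp add: p2_def q2_def algebra_simps)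
  show ?thesis
  proof (cases "1 + \<mu> = 0")
    case True
    hence "(x1,x2) = (a,b)" using x1e x2e by simp
    thus ?thesis by blast
  next
    case False
    define t where "t = 1/(1+\<mu>)"
    have Nx: "(x1-a)^2 + (x2-b)^2 = (1+\<mu>)^2 * (p1^2 + p2^2)"
      by (simp add: x1e x2e power2_eq_square algebra_simps)
    have "(x1-a)^2 + (x2-b)^2 \<noteq> 0" using Nx False Ny by simp
    moreover have "a + t*(x1 - a) = y1" "b + t*(x2 - b) = y2"
      using False by (simp_all add: t_def x1e x2e p1_def p2_def)
    moreover have "(1-t)^2 * ((x1-a)^2 + (x2-b)^2) = d^2"
    proof -
      have "(1-t) * (1+\<mu>) = \<mu>" using False by (simp add: t_def field_simps)
      hence "(1-t)^2 * ((x1-a)^2 + (x2-b)^2) = \<mu>^2 * (p1^2 + p2^2)"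
        unfolding Nx by (metis (no_types, lifting) mult.assoc power_mult_distrib)
      also have "\<dots> = q1^2 + q2^2" by (simp add: mu power_mult_distrib algebra_simps)
      also have "\<dots> = d^2" using B(2) by (simp add: q1_def q2_def)
      finally show ?thesis .
    qed
    ultimately show ?thesis using B(1) by metis
  qed
qed



definition Fx :: "'a::comm_ring_1 poly poly \<Rightarrow> 'a \<Rightarrow> 'a \<Rightarrow> 'a \<Rightarrow> 'a \<Rightarrow> 'a \<Rightarrow> 'a" where
  "Fx f a b x y t = eval2 f (a + t*(x-a)) (b + t*(y-b))"

definition Fp :: "'a::comm_ring_1 poly poly \<Rightarrow> 'a \<Rightarrow> 'a \<Rightarrow> 'a poly poly poly \<Rightarrow> 'a poly poly poly" where
  "Fp f a b T = Comp f ([:[:[:a:]:]:] + T * ([:[:[:0,1:]:]:] - [:[:[:a:]:]:]))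
                      ([:[:[:b:]:]:] + T * ([:[:0,1:]:] - [:[:[:b:]:]:]))"

lemma ev3_Fp: "ev3 (Fp f a b T) x y u = Fx f a b x y (ev3 T x y u)"
  unfolding Fp_def ev3_Comp Fx_def by (simp only: ev3_add ev3_mult ev3_minus ev3_K ev3_X1 ev3_X2)

definition Gp :: "'a::comm_ring_1 poly poly \<Rightarrow> 'a \<Rightarrow> 'a \<Rightarrow> 'a poly poly poly" where
  "Gp f a b = Fp f a b (1 - [:0,1:]) * Fp f a b (1 + [:0,1:])"

lemma ev3_Gp: "ev3 (Gp f a b) x y u = Fx f a b x y (1-u) * Fx f a b x y (1+u)"
  by (simp add: Gp_def ev3_Fp)

definition Np :: "'a::comm_ring_1 \<Rightarrow> 'a \<Rightarrow> 'a poly poly" where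
  "Np a b = [:[:-a,1:]:]^2 + [:[:-b:],1:]^2"

lemma eval2_Np: "eval2 (Np a b) x y = (x-a)^2 + (y-b)^2"
  by (simp add: Np_def eval2_def)

definition Phi :: "'a::comm_ring_1 poly poly \<Rightarrow> 'a \<Rightarrow> 'a \<Rightarrow> 'a \<Rightarrow> 'a poly poly" where
  "Phi f a b e = (\<Sum>j\<le>degree (Gp f a b). coeff (Gp f a b) (2*j) * [:[:e^j:]:] * (Np a b)^(degree (Gp f a b) - j))"

lemma Phi_eval:
  fixes f :: "'a::field_char_0 poly poly"
  assumes N: "(x-a)^2 + (y-b)^2 \<noteq> 0" and ue: "u^2 * ((x-a)^2 + (y-b)^2) = e"
  shows "eval2 (Phi f a b e) x y = ((x-a)^2 + (y-b)^2)^(degree (Gp f a b)) * (Fx f a b x y (1-u) * Fx f a b x y (1+u))"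
proof -
  let ?G = "Gp f a b"
  let ?m = "degree ?G"
  let ?N = "(x-a)^2 + (y-b)^2"
  define c where "c k = eval2 (coeff ?G k) x y" for k
  have ext: "ev3 ?G x y z = (\<Sum>k\<le>2*?m. c k * z^k)" for z
  proof -
    have "ev3 ?G x y z = (\<Sum>k\<le>?m. c k * z^k)" by (simp add: ev3_coeffs c_def)
    also have "\<dots> = (\<Sum>k\<le>2*?m. c k * z^k)"
      by (rule sum.mono_neutral_left) (auto simp: c_def coeff_eq_0)
    finally show ?thesis .
  qed
  have sym: "ev3 ?G x y (-u) = ev3 ?G x y u" by (simp add: ev3_Gp mult.commute)
  have "2 * ev3 ?G x y u = ev3 ?G x y u + ev3 ?G x y (-u)" using sym by simp
  also have "\<dots> = (\<Sum>k\<le>2*?m. c k * (u^k + (-u)^k))"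
    unfolding ext by (simp add: sum.distrib[symmetric] algebra_simps)
  also have "\<dots> = (\<Sum>j\<le>?m. c (2*j) * (u^(2*j) + (-u)^(2*j))) + (\<Sum>j<?m. c (2*j+1) * (u^(2*j+1) + (-u)^(2*j+1)))"
    by (rule sum_even_odd)
  also have "\<dots> = 2 * (\<Sum>j\<le>?m. c (2*j) * u^(2*j))"
  proof -
    have e1: "(-u)^(2*j) = u^(2*j)" for j by (rule power_minus_even) simp
    have e2: "(-u)^(2*j+1) = - (u^(2*j+1))" for j by (rule power_minus_odd) simp
    have z: "(\<Sum>j<?m. c (2*j+1) * (u^(2*j+1) + - (u^(2*j+1)))) = 0" by simp
    have t: "(\<Sum>j\<le>?m. c (2*j) * (u^(2*j) + u^(2*j))) = 2 * (\<Sum>j\<le>?m. c (2*j) * u^(2*j))"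
      by (simp add: sum_distrib_left algebra_simps)
    show ?thesis unfolding e1 e2 z t by simp
  qed
  finally have Ge: "ev3 ?G x y u = (\<Sum>j\<le>?m. c (2*j) * u^(2*j))" by simp
  have "eval2 (Phi f a b e) x y = (\<Sum>j\<le>?m. c (2*j) * e^j * ?N^(?m - j))"
    by (simp only: Phi_def eval2_sum eval2_mult eval2_power eval2_const eval2_Np c_def)
  also have "\<dots> = (\<Sum>j\<le>?m. ?N^?m * (c (2*j) * u^(2*j)))"
  proof (rule sum.cong[OF refl])
    fix j assume "j \<in> {..?m}"
    hence j: "j \<le> ?m" by simp
    have h1: "?N^?m = ?N^j * ?N^(?m-j)" using j by (simp add: power_add[symmetric])
    have h2: "e^j = u^(2*j) * ?N^j" by (simp add: ue[symmetric] power_mult_distrib power_mult)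
    show "c (2*j) * e^j * ?N^(?m - j) = ?N^?m * (c (2*j) * u^(2*j))"
      unfolding h1 h2 by (simp add: mult_ac)
  qed
  also have "\<dots> = ?N^?m * ev3 ?G x y u" by (simp add: Ge sum_distrib_left)
  finally show ?thesis by (simp add: ev3_Gp)
qed



lemma no_line:
  fixes f :: "'a::field_char_0 poly poly"
  assumes irr: "irreducible f" and nl: "\<not> line_through (a,b) (curve f)"
    and pq: "(p,q) \<noteq> (a,b)"
  shows "\<exists>t. Fx f a b p q t \<noteq> 0"
proof (rule ccontr)
  assume "\<not> (\<exists>t. Fx f a b p q t \<noteq> 0)"
  hence all: "\<forall>t. eval2 f (a + t*(p-a)) (b + t*(q-b)) = 0" by (simp add: Fx_def)
  have uv: "(q - b, -(p - a)) \<noteq> (0,0)" using pq by auto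
  have "\<forall>x y. (q-b)*(x-a) + (-(p-a))*(y-b) = 0 \<longrightarrow> eval2 f x y = 0"
  proof (intro allI impI)
    fix x y assume h: "(q-b)*(x-a) + (-(p-a))*(y-b) = 0"
    show "eval2 f x y = 0"
    proof (cases "p = a")
      case False
      define t where "t = (x-a)/(p-a)"
      have "a + t*(p-a) = x" using False by (simp add: t_def)
      moreover have "b + t*(q-b) = y" using False h by (simp add: t_def field_simps)
      ultimately show ?thesis using all by metis
    next
      case True
      hence qb: "q \<noteq> b" using pq by auto
      hence "x = a" using h True by simp
      define t where "t = (y-b)/(q-b)"
      have "a + t*(p-a) = x" using True \<open>x = a\<close> by simp
      moreover have "b + t*(q-b) = y" using qb by (simp add: t_def)
      ultimately show ?thesis using all by metis
    qed
  qed
  from line_irr[OF irr uv this] nl show False by simp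
qed

lemma closure_van:
  fixes f :: "'a::field poly poly"
  assumes x: "(x1,x2) \<in> conchoid f A d"
    and van: "\<And>z1 z2. (z1,z2) \<in> fst ` conchoid_B f A d \<Longrightarrow> eval2 P z1 z2 = 0"
  shows "eval2 P x1 x2 = 0"
proof -
  have "zariski_closed (zero_set {P})" by (auto simp: zariski_closed_def)
  moreover have "fst ` conchoid_B f A d \<subseteq> zero_set {P}"
    using van by (auto simp: zero_set_def)
  ultimately have "conchoid f A d \<subseteq> zero_set {P}"
    unfolding conchoid_def zariski_closure_def by blast
  thus ?thesis using x by (auto simp: zero_set_def)
qed

lemma vanish:
  fixes f :: "'a::field_char_0 poly poly"
  assumes x: "(x1,x2) \<in> fst ` conchoid_B f (a,b) d" and ne: "(x1,x2) \<noteq> (a,b)"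
  shows "eval2 (Phi f a b (d^2)) x1 x2 = 0"
proof -
  from img_prop[OF x] ne obtain t where N: "(x1-a)^2 + (x2-b)^2 \<noteq> 0"
    and t: "eval2 f (a + t*(x1 - a)) (b + t*(x2 - b)) = 0" "(1-t)^2 * ((x1-a)^2 + (x2-b)^2) = d^2"
    by blast
  have "eval2 (Phi f a b (d^2)) x1 x2 = ((x1-a)^2 + (x2-b)^2)^(degree (Gp f a b)) *
     (Fx f a b x1 x2 (1-(1-t)) * Fx f a b x1 x2 (1+(1-t)))"
    by (rule Phi_eval[OF N t(2)])
  also have "Fx f a b x1 x2 (1-(1-t)) = 0" using t(1) by (simp add: Fx_def)
  finally show ?thesis by simp
qed

lemma vanish_closure:
  fixes f :: "'a::field_char_0 poly poly"
  assumes x: "(x1,x2) \<in> conchoid f (a,b) d" and ne: "(x1,x2) \<noteq> (a,b)"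
  shows "eval2 (Phi f a b (d^2)) x1 x2 = 0"
proof -
  let ?P = "Phi f a b (d^2)"
  have e1: "eval2 (?P * [:[:-a,1:]:]) x1 x2 = 0"
  proof (rule closure_van[OF x])
    fix z1 z2 assume z: "(z1,z2) \<in> fst ` conchoid_B f (a,b) d"
    show "eval2 (?P * [:[:-a,1:]:]) z1 z2 = 0"
    proof (cases "(z1,z2) = (a,b)")
      case True thus ?thesis by (simp add: eval2_def)
    next
      case False thus ?thesis using vanish[OF z False] by (simp only: eval2_mult mult_zero_left)
    qed
  qed
  have e2: "eval2 (?P * [:[:-b:],1:]) x1 x2 = 0"
  proof (rule closure_van[OF x])
    fix z1 z2 assume z: "(z1,z2) \<in> fst ` conchoid_B f (a,b) d"
    show "eval2 (?P * [:[:-b:],1:]) z1 z2 = 0"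
    proof (cases "(z1,z2) = (a,b)")
      case True thus ?thesis by (simp add: eval2_def)
    next
      case False thus ?thesis using vanish[OF z False] by (simp only: eval2_mult mult_zero_left)
    qed
  qed
  have h: "eval2 [:[:-a,1:]:] x1 x2 = x1 - a" "eval2 [:[:-b:],1:] x1 x2 = x2 - b"
    by (simp_all add: eval2_def)
  have "eval2 ?P x1 x2 * (x1 - a) = 0" "eval2 ?P x1 x2 * (x2 - b) = 0"
    using e1 e2 unfolding eval2_mult h by auto
  with ne show ?thesis by auto
qed

lemma Phi_nonzero:
  fixes f :: "'a::field_char_0 poly poly"
  assumes irr: "irreducible f" and nl: "\<not> line_through (a,b) (curve f)"
  shows "Phi f a b (d^2) \<noteq> 0"
proof -
  obtain H where H: "\<And>s. poly H s = eval2 f (a + 1*s) (b + 0*s)"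
    using univ_comp[of f a 1 b 0] by blast
  obtain t0 where "Fx f a b (a+1) b t0 \<noteq> 0"
    using no_line[OF irr nl, of "a+1" b] by auto
  hence "poly H t0 \<noteq> 0" by (simp add: H Fx_def)
  hence Hnz: "H \<noteq> 0" by auto
  let ?Z = "{r. poly H r = 0}"
  have fin: "finite ({0} \<union> (\<lambda>r. r + d) ` ?Z \<union> (\<lambda>r. r - d) ` ?Z)"
    using poly_roots_finite[OF Hnz] by simp
  obtain l where l: "l \<notin> {0} \<union> (\<lambda>r. r + d) ` ?Z \<union> (\<lambda>r. r - d) ` ?Z"
    using ex_new_if_finite[OF infinite_UNIV_char_0 fin] by blast
  hence l0: "l \<noteq> 0" by auto
  have h1: "poly H (l - d) \<noteq> 0"
  proof
    assume "poly H (l - d) = 0"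
    hence "l \<in> (\<lambda>r. r + d) ` ?Z" by (auto intro!: image_eqI[of _ _ "l - d"])
    with l show False by blast
  qed
  have h2: "poly H (l + d) \<noteq> 0"
  proof
    assume "poly H (l + d) = 0"
    hence "l \<in> (\<lambda>r. r - d) ` ?Z" by (auto intro!: image_eqI[of _ _ "l + d"])
    with l show False by blast
  qed
  have N: "((a+l)-a)^2 + (b-b)^2 \<noteq> 0" using l0 by simp
  have ue: "(d/l)^2 * (((a+l)-a)^2 + (b-b)^2) = d^2" using l0 by (simp add: power_divide)
  have "eval2 (Phi f a b (d^2)) (a+l) b = (((a+l)-a)^2 + (b-b)^2)^(degree (Gp f a b)) *
     (Fx f a b (a+l) b (1-d/l) * Fx f a b (a+l) b (1+d/l))"
    by (rule Phi_eval[OF N ue])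
  also have "Fx f a b (a+l) b (1-d/l) = poly H (l - d)"
    using l0 by (simp add: H Fx_def algebra_simps diff_divide_distrib)
  also have "Fx f a b (a+l) b (1+d/l) = poly H (l + d)"
    using l0 by (simp add: H Fx_def algebra_simps add_divide_distrib)
  finally have "eval2 (Phi f a b (d^2)) (a+l) b \<noteq> 0" using h1 h2 l0 by simp
  thus ?thesis by auto
qed

lemma sq_finite:
  fixes c :: "'a::field"
  shows "finite {d. d^2 = c}"
proof -
  have "[:-c, 0, 1:] \<noteq> 0" by simp
  from poly_roots_finite[OF this] show ?thesis
    by (rule finite_subset[rotated]) (auto simp: power2_eq_square)
qed

lemma sqrt_ex:
  fixes c :: "'a::alg_closed_field"
  shows "\<exists>u. u^2 = c"
proof -
  have "degree [:-c, 0, 1:] > 0" by simp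
  from alg_closed_imp_poly_has_root[OF this] obtain u where "poly [:-c, 0, 1:] u = 0" by blast
  hence "u^2 = c" by (simp add: power2_eq_square algebra_simps)
  thus ?thesis by blast
qed

lemma good_finite:
  fixes f :: "'a::{alg_closed_field, field_char_0} poly poly"
  assumes N: "(p-a)^2 + (q-b)^2 \<noteq> 0" and t0: "Fx f a b p q t0 \<noteq> 0"
    and van: "\<forall>d\<in>D. eval2 (Phi f a b (d^2)) p q = 0"
  shows "finite D"
proof -
  let ?N = "(p-a)^2 + (q-b)^2"
  obtain R where R: "\<And>s. poly R s = eval2 f (a + (p-a)*s) (b + (q-b)*s)"
    using univ_comp by blast
  have RF: "poly R s = Fx f a b p q s" for s by (simp add: R Fx_def mult.commute)
  have "R \<noteq> 0" using t0 RF[of t0] by auto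
  let ?Z = "{r. poly R r = 0}"
  have finZ: "finite ?Z" using poly_roots_finite[OF \<open>R \<noteq> 0\<close>] .
  let ?U = "(\<lambda>z. 1 - z) ` ?Z \<union> (\<lambda>z. z - 1) ` ?Z"
  let ?E = "(\<lambda>u. u^2 * ?N) ` ?U"
  have finE: "finite ?E" using finZ by simp
  have "D \<subseteq> (\<Union>c\<in>?E. {d. d^2 = c})"
  proof
    fix d assume d: "d \<in> D"
    obtain u where u: "u^2 = d^2 / ?N" using sqrt_ex by blast
    have ue: "u^2 * ?N = d^2" using u N by simp
    have "eval2 (Phi f a b (d^2)) p q = ?N^(degree (Gp f a b)) * (Fx f a b p q (1-u) * Fx f a b p q (1+u))"
      by (rule Phi_eval[OF N ue])
    hence "Fx f a b p q (1-u) * Fx f a b p q (1+u) = 0" using van d N by simp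
    hence "poly R (1-u) = 0 \<or> poly R (1+u) = 0" by (simp add: RF)
    hence uU: "u \<in> ?U"
    proof
      assume "poly R (1-u) = 0"
      thus ?thesis by (auto intro!: image_eqI[of _ _ "1-u"])
    next
      assume "poly R (1+u) = 0"
      thus ?thesis by (auto intro!: image_eqI[of _ _ "1+u"])
    qed
    have "u^2 * ?N \<in> ?E" using uU by (rule imageI)
    hence "d^2 \<in> ?E" using ue by simp
    thus "d \<in> (\<Union>c\<in>?E. {d. d^2 = c})" by blast
  qed
  moreover have "finite (\<Union>c\<in>?E. {d. d^2 = c})" using finE sq_finite by blast
  ultimately show ?thesis by (rule finite_subset)
qed

lemma L_case:
  fixes f :: "'a::{alg_closed_field, field_char_0} poly poly"
  assumes irr: "irreducible f" and nl: "\<not> line_through (a,b) (curve f)"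
    and vv: "v*v = -1"
    and Mline: "\<And>x y. (x,y) \<in> M \<Longrightarrow> (x-a) + v*(y-b) = 0"
    and Mc: "M \<subseteq> conchoid f (a,b) d"
  shows "finite M"
proof -
  let ?l = "[:[:-(1*a+v*b), 1:], [:v:]:] :: 'a poly poly"
  have v0: "v \<noteq> 0" using vv by auto
  have dl: "degree ?l > 0" using v0 by simp
  let ?P = "Phi f a b (d^2)"
  have Pnz: "?P \<noteq> 0" by (rule Phi_nonzero[OF irr nl])
  obtain k Q where PQ: "?P = ?l^k * Q" and ndvd: "\<not> ?l dvd Q"
    using factor_out[OF dl Pnz] by blast
  have evl: "eval2 ?l x y = (x-a) + v*(y-b)" for x y
    using eval2_line[of 1 a v b x y] by simp
  have Nfac: "(x-a)^2 + (y-b)^2 = ((x-a) + v*(y-b)) * ((x-a) - v*(y-b))" for x y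
  proof -
    have "((x-a) + v*(y-b)) * ((x-a) - v*(y-b)) = (x-a)^2 - (v*v)*(y-b)^2"
      by (simp add: power2_eq_square algebra_simps)
    thus ?thesis using vv by simp
  qed
  let ?Q' = "Q * [:[:-b:],1:]"
  have ev2: "eval2 [:[:-b:],1:] x y = y - b" for x y :: 'a by (simp add: eval2_def)
  have QM: "eval2 Q x y * (y - b) = 0" if xy: "(x,y) \<in> M" for x y
  proof -
    have "eval2 ?Q' x y = 0"
    proof (rule closure_van)
      show "(x,y) \<in> conchoid f (a,b) d" using xy Mc by blast
    next
      fix z1 z2 assume z: "(z1,z2) \<in> fst ` conchoid_B f (a,b) d"
      show "eval2 ?Q' z1 z2 = 0"
      proof (cases "(z1,z2) = (a,b)")
        case True thus ?thesis by (simp add: eval2_def)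
      next
        case False
        have N: "(z1-a)^2 + (z2-b)^2 \<noteq> 0" using img_prop[OF z] False by blast
        hence lz: "eval2 ?l z1 z2 \<noteq> 0" unfolding evl using Nfac[of z1 z2] by auto
        have "eval2 ?P z1 z2 = 0" by (rule vanish[OF z False])
        hence "eval2 ?l z1 z2 ^ k * eval2 Q z1 z2 = 0"
          by (subst (asm) PQ) (simp only: eval2_mult eval2_power)
        hence "eval2 Q z1 z2 = 0" using lz by simp
        thus ?thesis by (simp only: eval2_mult mult_zero_left)
      qed
    qed
    thus ?thesis by (simp only: eval2_mult ev2)
  qed
  obtain x0 y0 where xy0: "(x0-a) + v*(y0-b) = 0" "eval2 Q x0 y0 \<noteq> 0"
  proof -
    have "\<not> (\<forall>x y. 1*(x-a) + v*(y-b) = 0 \<longrightarrow> eval2 Q x y = 0)"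
      using line_dvd[of 1 v a b Q] ndvd by auto
    thus ?thesis using that by auto
  qed
  obtain W where W: "\<And>s. poly W s = eval2 Q (a + (-v)*s) (b + 1*s)"
    using univ_comp by blast
  have "x0 = a + (-v)*(y0-b)" using xy0(1) by (simp add: algebra_simps)
  hence "poly W (y0 - b) \<noteq> 0" using xy0(2) by (simp add: W)
  hence Wnz: "W \<noteq> 0" by auto
  have "M \<subseteq> (\<lambda>s. (a + (-v)*s, b + 1*s)) ` ({0} \<union> {s. poly W s = 0})"
  proof
    fix z assume zM: "z \<in> M"
    obtain x y where z: "z = (x,y)" by (cases z)
    have xe: "x = a + (-v)*(y-b)" using Mline[OF zM[unfolded z]] by (simp add: algebra_simps)
    have "eval2 Q x y * (y - b) = 0" using QM zM z by blast
    hence "y - b \<in> {0} \<union> {s. poly W s = 0}" using xe by (auto simp: W)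
    moreover have "z = (a + (-v)*(y-b), b + 1*(y-b))" using z xe by simp
    ultimately show "z \<in> (\<lambda>s. (a + (-v)*s, b + 1*s)) ` ({0} \<union> {s. poly W s = 0})" by blast
  qed
  moreover have "finite ({0} \<union> {s. poly W s = 0})" using poly_roots_finite[OF Wnz] by simp
  ultimately show ?thesis using finite_subset by blast
qed

lemma zero_set_insert: "zero_set (insert l F) = {(x,y). (x,y) \<in> zero_set F \<and> eval2 l x y = 0}"
  by (auto simp: zero_set_def)

theorem lemma4:
  fixes f :: "'a::{alg_closed_field, field_char_0} poly poly"
    and A :: "'a \<times> 'a"
  assumes irr: "irreducible f"
    and nonempty: "C0 f A \<noteq> {}"
    and not_circle: "\<not> (\<exists>r. curve f = circle_at A r)"
    and not_line: "\<not> line_through A (curve f)"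
  shows "\<not> (\<exists>D M. infinite D \<and> D \<subseteq> - {0} \<and> irreducible_curve M \<and>
              (\<forall>d\<in>D. component_of M (conchoid f A d)))"
proof
  assume "\<exists>D M. infinite D \<and> D \<subseteq> - {0} \<and> irreducible_curve M \<and>
              (\<forall>d\<in>D. component_of M (conchoid f A d))"
  then obtain D M where infD: "infinite D" and irrM: "irreducible_curve M"
    and comp: "\<forall>d\<in>D. component_of M (conchoid f A d)" by blast
  obtain a b where A: "A = (a,b)" by (cases A)
  have nl: "\<not> line_through (a,b) (curve f)" using not_line A by simp
  obtain g where g: "irreducible g" "M = curve g" using irrM by (auto simp: irreducible_curve_def)
  have infM: "infinite M" using curve_infinite[OF g(1)] g(2) by simp
  obtain d0 where d0: "d0 \<in> D" using infD by (metis finite.emptyI ex_in_conv)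
  have sub: "M \<subseteq> conchoid f (a,b) d" if "d \<in> D" for d
    using comp that A by (auto simp: component_of_def)
  have zi: "zariski_irreducible M" using comp d0 by (auto simp: component_of_def)
  show False
  proof (cases "\<exists>p q. (p,q) \<in> M \<and> (p-a)^2 + (q-b)^2 \<noteq> 0")
    case True
    then obtain p q where pq: "(p,q) \<in> M" "(p-a)^2 + (q-b)^2 \<noteq> 0" by blast
    have ne: "(p,q) \<noteq> (a,b)" using pq(2) by auto
    obtain t0 where t0: "Fx f a b p q t0 \<noteq> 0" using no_line[OF irr nl ne] by blast
    have "\<forall>d\<in>D. eval2 (Phi f a b (d^2)) p q = 0"
      using vanish_closure[OF _ ne] sub pq(1) by blast
    from good_finite[OF pq(2) t0 this] infD show False by simp
  next
    case False
    hence M0: "\<And>p q. (p,q) \<in> M \<Longrightarrow> (p-a)^2 + (q-b)^2 = 0" by blast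
    obtain i :: 'a where ii: "i^2 = -1" using sqrt_ex by blast
    hence ii': "i*i = -1" "(-i)*(-i) = -1" by (simp_all add: power2_eq_square)
    obtain F0 where F0: "M = zero_set F0" using zi unfolding zariski_irreducible_def zariski_closed_def by blast
    let ?l1 = "[:[:-(1*a+i*b), 1:], [:i:]:]"
    let ?l2 = "[:[:-(1*a+(-i)*b), 1:], [:-i:]:]"
    define S1 where "S1 = zero_set (insert ?l1 F0)"
    define S2 where "S2 = zero_set (insert ?l2 F0)"
    have S1e: "S1 = {(x,y) \<in> M. (x-a) + i*(y-b) = 0}"
      unfolding S1_def zero_set_insert F0[symmetric] eval2_line by simp
    have S2e: "S2 = {(x,y) \<in> M. (x-a) + (-i)*(y-b) = 0}"
      unfolding S2_def zero_set_insert F0[symmetric] eval2_line by simp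
    have cl: "zariski_closed S1" "zariski_closed S2"
      unfolding S1_def S2_def zariski_closed_def by blast+
    have "M = S1 \<union> S2"
    proof
      show "S1 \<union> S2 \<subseteq> M" using S1e S2e by auto
      show "M \<subseteq> S1 \<union> S2"
      proof
        fix z assume zM: "z \<in> M"
        obtain x y where z: "z = (x,y)" by (cases z)
        have "((x-a) + i*(y-b)) * ((x-a) + (-i)*(y-b)) = (x-a)^2 - (i*i)*(y-b)^2"
          by (simp add: power2_eq_square algebra_simps)
        also have "\<dots> = (x-a)^2 + (y-b)^2" unfolding ii'(1) by simp
        also have "\<dots> = 0" using M0[of x y] zM z by simp
        finally have "(x-a) + i*(y-b) = 0 \<or> (x-a) + (-i)*(y-b) = 0" by simp
        thus "z \<in> S1 \<union> S2"
        proof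
          assume "(x-a) + i*(y-b) = 0"
          hence "(x,y) \<in> S1" using zM z by (subst S1e) simp
          thus ?thesis using z by simp
        next
          assume "(x-a) + (-i)*(y-b) = 0"
          hence "(x,y) \<in> S2" using zM z by (subst S2e) simp
          thus ?thesis using z by simp
        qed
      qed
    qed
    moreover have "\<forall>S1 S2. zariski_closed S1 \<longrightarrow> zariski_closed S2 \<longrightarrow> M = S1 \<union> S2 \<longrightarrow> M = S1 \<or> M = S2"
      using zi unfolding zariski_irreducible_def by blast
    ultimately have "M = S1 \<or> M = S2" using cl by blast
    hence "finite M"
    proof
      assume "M = S1"
      have "\<And>x y. (x,y) \<in> M \<Longrightarrow> (x-a) + i*(y-b) = 0"
      proof -
        fix x y assume "(x,y) \<in> M"
        hence "(x,y) \<in> S1" using \<open>M = S1\<close> by simp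
        thus "(x-a) + i*(y-b) = 0" by (subst (asm) S1e) simp
      qed
      from L_case[OF irr nl ii'(1) this sub[OF d0]] show ?thesis .
    next
      assume "M = S2"
      have "\<And>x y. (x,y) \<in> M \<Longrightarrow> (x-a) + (-i)*(y-b) = 0"
      proof -
        fix x y assume "(x,y) \<in> M"
        hence "(x,y) \<in> S2" using \<open>M = S2\<close> by simp
        thus "(x-a) + (-i)*(y-b) = 0" by (subst (asm) S2e) simp
      qed
      from L_case[OF irr nl ii'(2) this sub[OF d0]] show ?thesis .
    qed
    with infM show False by simp
  qed
qed

end
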